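(* Let $\boldsymbol{\mu}=(\mu_s)_{s\ge1}$ be a fixed probability distribution on $\{1,2,\dots\}$ with $\mu_1>0$ and $\sum_{s=1}^\infty s\mu_s<\infty$, and for each $n\ge1$ let $\Pi_n\sim ESC_{[n]}(\boldsymbol{\mu})$ with $K_n$ its number of clusters. Then, as $n\to\infty$, $$\frac{K_n}{n}\xrightarrow{p}\Big(\sum_{s=1}^\infty s\mu_s\Big)^{-1}.$$
   Context: For a fixed distribution $\boldsymbol{\mu}$ on the positive integers with $\mu_1>0$, $ESC_{[n]}(\boldsymbol{\mu})$ is the law of the following random partition of $[n]=\{1,\dots,n\}$: let $S_1,S_2,\dots$ be i.i.d. with law $\boldsymbol{\mu}$, condition on the event $E_n$ that $\sum_{j=1}^k S_j=n$ for some $k\in\mathbb{N}$, let $K$ be that unique $k$, and let $(z_1,\dots,z_n)$ be a uniformly random permutation of the vector with $S_1$ copies of $1$, ..., $S_K$ copies of $K$; the partition has blocks $\{i:z_i=j\}$, $j=1,\dots,K$ (so it has $K$ clusters of sizes $S_1,\dots,S_K$). $\xrightarrow{p}$ denotes convergence in probability. *)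

theory Defs
  imports "HOL-Probability.Probability" "HOL-Combinatorics.Permutations"
begin

text \<open>Compositions of n: finite sequences (s_1,...,s_k) of positive integers summing to n.
  These are exactly the possible values of (S_1,...,S_K) on the event E_n.\<close>
definition compositions :: "nat \<Rightarrow> nat list set" where
  "compositions n = {xs. (\<forall>x\<in>set xs. 0 < x) \<and> sum_list xs = n}"

text \<open>P(K = k, S_1 = s_1, ..., S_k = s_k) for i.i.d. S_j with law mu.\<close>
definition comp_weight :: "nat pmf \<Rightarrow> nat list \<Rightarrow> real" where
  "comp_weight \<mu> xs = prod_list (map (pmf \<mu>) xs)"

text \<open>Law of (S_1,...,S_K) conditioned on E_n: weights normalized by P(E_n).\<close>
definition ESC_sizes :: "nat pmf \<Rightarrow> nat \<Rightarrow> nat list pmf" where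
  "ESC_sizes \<mu> n = embed_pmf (\<lambda>xs. if xs \<in> compositions n
      then comp_weight \<mu> xs / (\<Sum>ys\<in>compositions n. comp_weight \<mu> ys) else 0)"

definition label_vector :: "nat list \<Rightarrow> nat list" where
  "label_vector xs = concat (map (\<lambda>j. replicate (xs ! j) (Suc j)) [0..<length xs])"

definition ESC :: "nat pmf \<Rightarrow> nat \<Rightarrow> nat set set pmf" where
  "ESC \<mu> n = do {
     xs \<leftarrow> ESC_sizes \<mu> n;
     \<sigma> \<leftarrow> pmf_of_set {\<sigma>. \<sigma> permutes {1..n}};
     return_pmf {{i \<in> {1..n}. label_vector xs ! (\<sigma> i - 1) = j} | j. j \<in> {1..length xs}}
   }"

end

theory Submission
  imports Defs
begin


definition A :: "(nat \<Rightarrow> real) \<Rightarrow> nat \<Rightarrow> real" where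
  "A g n = (\<Sum>xs\<in>compositions n. prod_list (map g xs))"

lemma length_le_sum_pos: "\<forall>x\<in>set xs. 0 < (x::nat) \<Longrightarrow> length xs \<le> sum_list xs"
  by (induction xs) auto

lemma compositions_finite: "finite (compositions n)"
proof -
  have "compositions n \<subseteq> {xs. set xs \<subseteq> {0..n} \<and> length xs \<le> n}"
  proof
    fix xs assume xs: "xs \<in> compositions n"
    then have "length xs \<le> n" using length_le_sum_pos unfolding compositions_def by auto
    moreover have "set xs \<subseteq> {0..n}" using xs member_le_sum_list unfolding compositions_def by fastforce
    ultimately show "xs \<in> {xs. set xs \<subseteq> {0..n} \<and> length xs \<le> n}" by simp
  qed
  moreover have "finite {xs. set xs \<subseteq> {0..n::nat} \<and> length xs \<le> n}"
    by (rule finite_lists_length_le) auto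
  ultimately show ?thesis by (rule finite_subset)
qed

lemma compositions_0: "compositions 0 = {[]}"
  unfolding compositions_def by (auto simp: sum_list_eq_0_iff) (metis last_in_set less_not_refl)

lemma compositions_pos: "0 < n \<Longrightarrow> compositions n = (\<Union>s\<in>{1..n}. (Cons s) ` compositions (n - s))"
proof (intro equalityI subsetI)
  fix xs assume n: "0 < n" and xs: "xs \<in> compositions n"
  then obtain s ys where "xs = s # ys" unfolding compositions_def by (cases xs) auto
  with xs show "xs \<in> (\<Union>s\<in>{1..n}. (Cons s) ` compositions (n - s))"
    unfolding compositions_def by (auto intro!: bexI[of _ s])
next
  fix xs assume "0 < n" and "xs \<in> (\<Union>s\<in>{1..n}. (Cons s) ` compositions (n - s))"
  then show "xs \<in> compositions n" unfolding compositions_def by auto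
qed

lemma A_0: "A g 0 = 1"
  by (simp add: A_def compositions_0)

lemma A_rec: "0 < n \<Longrightarrow> A g n = (\<Sum>s=1..n. g s * A g (n - s))"
proof -
  assume n: "0 < n"
  have "A g n = (\<Sum>s\<in>{1..n}. \<Sum>xs\<in>(Cons s) ` compositions (n - s). prod_list (map g xs))"
    unfolding A_def compositions_pos[OF n]
    by (rule sum.UNION_disjoint) (auto simp: compositions_finite)
  also have "\<dots> = (\<Sum>s=1..n. g s * A g (n - s))"
    by (rule sum.cong) (auto simp: sum.reindex A_def sum_distrib_left)
  finally show ?thesis .
qed

lemma A_nonneg: "(\<And>x. 0 \<le> g x) \<Longrightarrow> 0 \<le> A g n"
  unfolding A_def by (intro sum_nonneg prod_list_nonneg) auto

lemma A_bound:
  assumes g: "\<And>x. 0 \<le> g x"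
  shows "A g n \<le> max 1 (\<Sum>s=1..n. g s) ^ n"
proof (induction n rule: less_induct)
  case (less n)
  show ?case
  proof (cases "n = 0")
    case True then show ?thesis by (simp add: A_0)
  next
    case False
    let ?G = "max 1 (\<Sum>s=1..n. g s)"
    have G1: "1 \<le> ?G" by simp
    have "A g n = (\<Sum>s=1..n. g s * A g (n - s))" using False A_rec by auto
    also have "\<dots> \<le> (\<Sum>s=1..n. g s * ?G ^ (n - 1))"
    proof (rule sum_mono)
      fix s assume s: "s \<in> {1..n}"
      have "A g (n - s) \<le> max 1 (\<Sum>s=1..n-s. g s) ^ (n - s)"
        using less s False by auto
      also have "\<dots> \<le> ?G ^ (n - s)"
        by (intro power_mono max.mono sum_mono2) (auto simp: g sum_nonneg)
      also have "\<dots> \<le> ?G ^ (n - 1)"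
        using s G1 by (intro power_increasing) auto
      finally show "g s * A g (n - s) \<le> g s * ?G ^ (n - 1)"
        by (intro mult_left_mono g)
    qed
    also have "\<dots> = (\<Sum>s=1..n. g s) * ?G ^ (n - 1)" by (simp add: sum_distrib_right)
    also have "\<dots> \<le> ?G * ?G ^ (n - 1)"
      using G1 by (intro mult_right_mono) auto
    also have "\<dots> = ?G ^ n" using False by (cases n) auto
    finally show ?thesis .
  qed
qed



locale esc =
  fixes \<mu> :: "nat pmf"
  assumes no0: "0 \<notin> set_pmf \<mu>"
    and pos1: "pmf \<mu> 1 > 0"
    and integ: "integrable (measure_pmf \<mu>) real"
begin

definition "m = measure_pmf.expectation \<mu> real"
definition "T N = (\<Sum>x\<in>{..N}. pmf \<mu> x * real x)"
definition "P N = (\<Sum>x\<in>{..N}. pmf \<mu> x)"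

lemma pmf0: "pmf \<mu> 0 = 0"
  using no0 by (simp add: set_pmf_iff)

lemma P_le1: "P N \<le> 1"
proof -
  have "P N = measure (measure_pmf \<mu>) {..N}"
    unfolding P_def by (simp add: measure_measure_pmf_finite)
  also have "\<dots> \<le> 1" by (rule measure_pmf.prob_le_1)
  finally show ?thesis .
qed

lemma T_lim: "T \<longlonglongrightarrow> m"
proof -
  have eq: "T N = (\<integral>x. real x * indicator {..N} x \<partial>measure_pmf \<mu>)" for N
    unfolding T_def
    by (subst integral_measure_pmf_real[where A="{..N}"]) (auto intro!: sum.cong simp: indicator_def)
  have "(\<lambda>N. \<integral>x. real x * indicator {..N} x \<partial>measure_pmf \<mu>) \<longlonglongrightarrow> (\<integral>x. real x \<partial>measure_pmf \<mu>)"
  proof (rule integral_dominated_convergence[where w="\<lambda>x. real x"])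
    show "AE x in measure_pmf \<mu>. (\<lambda>i. real x * indicator {..i} x) \<longlonglongrightarrow> real x"
    proof (rule AE_I2)
      fix x :: nat assume "x \<in> space (measure_pmf \<mu>)"
      have "eventually (\<lambda>i. real x * indicator {..i} x = real x) sequentially"
        using eventually_ge_at_top[of x] by eventually_elim (simp add: indicator_def)
      then show "(\<lambda>i. real x * indicator {..i} x) \<longlonglongrightarrow> real x"
        by (rule tendsto_eventually)
    qed
  qed (auto simp: integ indicator_def)
  then show ?thesis unfolding m_def eq by simp
qed

lemma P_lim: "P \<longlonglongrightarrow> 1"
proof -
  have eq: "P N = (\<integral>x. indicator {..N} x \<partial>measure_pmf \<mu>)" for N
    unfolding P_def
    by (subst integral_measure_pmf_real[where A="{..N}"]) (auto intro!: sum.cong simp: indicator_def)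
  have "(\<lambda>N. \<integral>x. indicator {..N} x \<partial>measure_pmf \<mu>) \<longlonglongrightarrow> (\<integral>x. (1::real) \<partial>measure_pmf \<mu>)"
  proof (rule integral_dominated_convergence[where w="\<lambda>x. 1" and s="\<lambda>i x. indicator {..i} x"])
    show "AE x in measure_pmf \<mu>. (\<lambda>i. indicator {..i} x :: real) \<longlonglongrightarrow> 1"
    proof (rule AE_I2)
      fix x :: nat assume "x \<in> space (measure_pmf \<mu>)"
      have "eventually (\<lambda>i. indicator {..i} x = (1::real)) sequentially"
        using eventually_ge_at_top[of x] by eventually_elim (simp add: indicator_def)
      then show "(\<lambda>i. indicator {..i} x :: real) \<longlonglongrightarrow> 1"
        by (rule tendsto_eventually)
    qed
  qed (auto simp: indicator_def)
  then show ?thesis unfolding eq by simp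
qed

end


context esc begin

definition "u n = A (pmf \<mu>) n"
definition "r i = 1 - P i"
definition "R n = (\<Sum>i\<le>n. r i)"

lemma T_mono: "incseq T"
  unfolding T_def by (intro incseq_SucI) auto

lemma T_le_m: "T N \<le> m"
  using T_mono T_lim by (rule incseq_le)

lemma P_Suc: "P (Suc n) = P n + pmf \<mu> (Suc n)"
  unfolding P_def by simp

lemma T_Suc: "T (Suc n) = T n + pmf \<mu> (Suc n) * real (Suc n)"
  unfolding T_def by simp

lemma r_nonneg: "0 \<le> r i" using P_le1 unfolding r_def by simp
lemma r_le1: "r i \<le> 1" unfolding r_def P_def by (simp add: sum_nonneg)
lemma r_0: "r 0 = 1" unfolding r_def P_def by (simp add: pmf0)

lemma sum_split_atMost: "(n::nat) \<le> N \<Longrightarrow> (\<Sum>x\<le>N. f x) = (\<Sum>x\<le>n. f x) + (\<Sum>x\<in>{n<..N}. (f x :: real))"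
proof -
  assume "n \<le> N"
  then have "{..N} = {..n} \<union> {n<..N}" by auto
  then show ?thesis by (simp add: sum.union_disjoint[of "{..n}" "{n<..N}"] ivl_disj_int)
qed

lemma tail_bound: "real (Suc n) * r n \<le> m - T n"
proof -
  have "real (Suc n) * (P N - P n) \<le> m - T n" if "n \<le> N" for N
  proof -
    have "real (Suc n) * (P N - P n) = (\<Sum>x\<in>{n<..N}. pmf \<mu> x * real (Suc n))"
      unfolding P_def using sum_split_atMost[OF that, of "pmf \<mu>"] by (simp add: sum_distrib_left mult.commute)
    also have "\<dots> \<le> (\<Sum>x\<in>{n<..N}. pmf \<mu> x * real x)"
      by (intro sum_mono mult_left_mono) auto
    also have "\<dots> = T N - T n"
      unfolding T_def using sum_split_atMost[OF that, of "\<lambda>x. pmf \<mu> x * real x"] by simp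
    also have "\<dots> \<le> m - T n" using T_le_m by simp
    finally show ?thesis .
  qed
  moreover have "(\<lambda>N. real (Suc n) * (P N - P n)) \<longlonglongrightarrow> real (Suc n) * (1 - P n)"
    by (intro tendsto_intros P_lim)
  ultimately show ?thesis unfolding r_def
    by (intro LIMSEQ_le_const2[of "\<lambda>N. real (Suc n) * (P N - P n)"]) auto
qed

lemma R_eq: "R n = T n + real (Suc n) * r n"
proof (induction n)
  case 0 then show ?case by (simp add: R_def T_def r_0)
next
  case (Suc n)
  have "R (Suc n) = R n + r (Suc n)" by (simp add: R_def)
  also have "\<dots> = T (Suc n) + real (Suc (Suc n)) * r (Suc n)"
    using Suc by (simp add: r_def P_Suc T_Suc algebra_simps)
  finally show ?case .
qed

lemma R_le: "R n \<le> m"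
  using R_eq tail_bound by (simp add: algebra_simps)

lemma R_mono: "incseq R"
  unfolding R_def by (intro incseq_SucI) (simp add: r_nonneg)

lemma R_tail: "\<exists>L. \<forall>n\<ge>L. R n - R L \<le> 1/2"
proof -
  obtain l where l: "R \<longlonglongrightarrow> l" and le: "\<And>n. R n \<le> l"
    using incseq_convergent[OF R_mono, of m] R_le by blast
  from l have "eventually (\<lambda>n. dist (R n) l < 1/2) sequentially"
    by (intro tendstoD) auto
  then obtain L where "\<forall>n\<ge>L. dist (R n) l < 1/2" by (auto simp: eventually_sequentially)
  then have "l - R L < 1/2" using le[of L] by (auto simp: dist_real_def)
  then have "\<forall>n\<ge>L. R n - R L \<le> 1/2"
  proof (intro allI impI)
    fix n assume "l - R L < 1/2"
    have "R n \<le> l" by (rule le)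
    then show "R n - R L \<le> 1/2" using \<open>l - R L < 1/2\<close> by linarith
  qed
  then show ?thesis by blast
qed

lemma u_nonneg: "0 \<le> u n" unfolding u_def by (rule A_nonneg) simp

lemma u_le1: "u n \<le> 1"
proof -
  have "(\<Sum>s=1..n. pmf \<mu> s) \<le> P n" unfolding P_def by (intro sum_mono2) auto
  then have "max 1 (\<Sum>s=1..n. pmf \<mu> s) = 1" using P_le1[of n] by simp
  then show ?thesis using A_bound[of "pmf \<mu>" n] unfolding u_def by simp
qed

lemma u_rec: "0 < n \<Longrightarrow> u n = (\<Sum>s=1..n. pmf \<mu> s * u (n - s))"
  unfolding u_def by (rule A_rec)

lemma u_0: "u 0 = 1" unfolding u_def by (rule A_0)

lemma u_Suc_ge: "pmf \<mu> 1 * u k \<le> u (Suc k)"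
proof -
  have "pmf \<mu> 1 * u k = (\<Sum>s\<in>{1}. pmf \<mu> s * u (Suc k - s))" by simp
  also have "\<dots> \<le> (\<Sum>s=1..Suc k. pmf \<mu> s * u (Suc k - s))"
    by (intro sum_mono2) (auto simp: u_nonneg)
  finally show ?thesis using u_rec[of "Suc k"] by simp
qed

lemma u_shift_ge: "pmf \<mu> 1 ^ i * u k \<le> u (k + i)"
proof (induction i)
  case 0 then show ?case by simp
next
  case (Suc i)
  have "pmf \<mu> 1 ^ Suc i * u k = pmf \<mu> 1 * (pmf \<mu> 1 ^ i * u k)" by simp
  also have "\<dots> \<le> pmf \<mu> 1 * u (k + i)" using Suc by (intro mult_left_mono) auto
  also have "\<dots> \<le> u (k + Suc i)" using u_Suc_ge by simp
  finally show ?case .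
qed

lemma renewal: "(\<Sum>j\<le>n. u j * r (n - j)) = 1"
proof (induction n)
  case 0 then show ?case by (simp add: u_0 r_0)
next
  case (Suc n)
  have rS: "r (Suc n - j) = r (n - j) - pmf \<mu> (Suc n - j)" if "j \<le> n" for j
    using that by (simp add: r_def Suc_diff_le P_Suc)
  have re: "(\<Sum>j\<le>n. u j * pmf \<mu> (Suc n - j)) = (\<Sum>s=1..Suc n. pmf \<mu> s * u (Suc n - s))"
    by (rule sum.reindex_bij_witness[where i="\<lambda>s. Suc n - s" and j="\<lambda>j. Suc n - j"]) auto
  have "(\<Sum>j\<le>Suc n. u j * r (Suc n - j)) = u (Suc n) * r 0 + (\<Sum>j\<le>n. u j * r (Suc n - j))"
    by simp
  also have "(\<Sum>j\<le>n. u j * r (Suc n - j)) = (\<Sum>j\<le>n. u j * r (n - j)) - (\<Sum>j\<le>n. u j * pmf \<mu> (Suc n - j))"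
    by (simp add: rS right_diff_distrib sum_subtractf)
  also have "(\<Sum>j\<le>n. u j * pmf \<mu> (Suc n - j)) = u (Suc n)"
    using re u_rec[of "Suc n"] by simp
  finally show ?case using Suc by (simp add: r_0)
qed

lemma u_lower: "\<exists>c>0. \<forall>n. c \<le> u n"
proof -
  obtain L where L: "\<forall>n\<ge>L. R n - R L \<le> 1/2" using R_tail by blast
  define c where "c = pmf \<mu> 1 ^ L / (2 * (real L + 1))"
  have p1: "0 < pmf \<mu> 1" "pmf \<mu> 1 \<le> 1" using pos1 pmf_le_1 by auto
  have "c > 0" unfolding c_def using p1 by simp
  moreover have "c \<le> u n" for n
  proof (cases "n < L")
    case True
    have "c \<le> pmf \<mu> 1 ^ L" unfolding c_def using p1 by (simp add: field_simps)
    also have "\<dots> \<le> pmf \<mu> 1 ^ n" using True p1 by (intro power_decreasing) auto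
    also have "\<dots> \<le> u n" using u_shift_ge[of n 0] by (simp add: u_0)
    finally show ?thesis .
  next
    case False
    have "1 = (\<Sum>j\<le>n. u j * r (n - j))" using renewal by simp
    also have "\<dots> = (\<Sum>i\<le>n. u (n - i) * r i)"
      by (rule sum.reindex_bij_witness[where i="\<lambda>i. n - i" and j="\<lambda>j. n - j"]) auto
    also have "\<dots> = (\<Sum>i\<le>L. u (n - i) * r i) + (\<Sum>i\<in>{L<..n}. u (n - i) * r i)"
      using False by (intro sum_split_atMost) auto
    also have "(\<Sum>i\<le>L. u (n - i) * r i) \<le> (\<Sum>i\<le>L. u (n - i))"
      by (intro sum_mono) (metis mult_left_le r_le1 u_nonneg)
    also have "(\<Sum>i\<in>{L<..n}. u (n - i) * r i) \<le> (\<Sum>i\<in>{L<..n}. r i)"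
      by (intro sum_mono) (metis mult_left_le_one_le r_nonneg u_le1 u_nonneg)
    also have "(\<Sum>i\<in>{L<..n}. r i) = R n - R L"
      unfolding R_def using False sum_split_atMost[of L n r] by simp
    also have "\<dots> \<le> 1/2" using L False by simp
    finally have half: "1/2 \<le> (\<Sum>i\<le>L. u (n - i))" by simp
    have "\<exists>i\<le>L. 1 / (2 * (real L + 1)) \<le> u (n - i)"
    proof (rule ccontr)
      assume neg: "\<not> ?thesis"
      have lt: "u (n - i) < 1 / (2 * (real L + 1))" if "i \<le> L" for i
        using neg that by (meson not_le)
      have "(\<Sum>i\<le>L. u (n - i)) < (\<Sum>i\<le>L. 1 / (2 * (real L + 1)))"
        using lt by (intro sum_strict_mono) auto
      also have "\<dots> = 1/2" by (simp add: field_simps)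
      finally show False using half by simp
    qed
    then obtain i where i: "i \<le> L" "1 / (2 * (real L + 1)) \<le> u (n - i)" by blast
    have pw: "pmf \<mu> 1 ^ L \<le> pmf \<mu> 1 ^ i" using p1 i by (intro power_decreasing) auto
    have "c \<le> pmf \<mu> 1 ^ i / (2 * (real L + 1))"
      unfolding c_def using pw by (intro divide_right_mono) auto
    also have "\<dots> = pmf \<mu> 1 ^ i * (1 / (2 * (real L + 1)))" by simp
    also have "\<dots> \<le> pmf \<mu> 1 ^ i * u (n - i)"
      using i p1 by (intro mult_left_mono) auto
    also have "\<dots> \<le> u (n - i + i)" by (rule u_shift_ge)
    also have "n - i + i = n" using i False by simp
    finally show ?thesis .
  qed
  ultimately show ?thesis by blast
qed

end


lemma prod_list_exp:
  fixes f :: "'a \<Rightarrow> real"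
  shows "prod_list (map (\<lambda>x. f x * exp (\<phi> x)) xs) = prod_list (map f xs) * exp (sum_list (map \<phi> xs))"
  by (induction xs) (auto simp: exp_add mult_ac)

lemma sum_list_const: "sum_list (map (\<lambda>x. c) xs) = real (length xs) * (c::real)"
  by (induction xs) (auto simp: algebra_simps)

lemma sum_list_affine: "sum_list (map (\<lambda>x. a + b * real x) xs) = real (length xs) * a + b * real (sum_list xs)"
  by (induction xs) (auto simp: algebra_simps)

lemma exp_one_minus: "exp a * (1 - a) \<le> (1::real)"
proof -
  have "1 - a \<le> exp (-a)" using exp_ge_add_one_self[of "-a"] by simp
  then have "exp a * (1 - a) \<le> exp a * exp (-a)" by (intro mult_left_mono) auto
  then show ?thesis by (simp add: exp_minus)
qed

lemma exp_minus_one_le: "exp t - 1 \<le> t * exp (t::real)"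
proof -
  have "exp t * (1 - t) \<le> 1" by (rule exp_one_minus)
  then have "exp t - exp t * t \<le> 1" by (simp add: right_diff_distrib)
  moreover have "t * exp t = exp t * t" by (rule mult.commute)
  ultimately show ?thesis by linarith
qed

lemma one_minus_exp_ge: "0 \<le> (t::real) \<Longrightarrow> t / (1 + t) \<le> 1 - exp (-t)"
proof -
  assume t: "0 \<le> t"
  have "1 + t \<le> exp t" by (rule exp_ge_add_one_self)
  then have "1 / exp t \<le> 1 / (1 + t)" using t by (intro divide_left_mono) auto
  then have "exp (-t) \<le> 1 / (1 + t)" by (simp add: exp_minus inverse_eq_divide)
  moreover have "1 - 1 / (1 + t) = t / (1 + t)"
  proof -
    have d: "1 + t \<noteq> 0" using t by simp
    show ?thesis using d by (simp add: field_simps)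
  qed
  ultimately show ?thesis by linarith
qed

lemma exp_decay: "0 < (c::real) \<Longrightarrow> (\<lambda>n. exp (- c * real n)) \<longlonglongrightarrow> 0"
proof -
  assume c: "0 < c"
  have "(\<lambda>n. exp (- c) ^ n) \<longlonglongrightarrow> 0" using c by (intro LIMSEQ_power_zero) auto
  moreover have "exp (- c) ^ n = exp (- c * real n)" for n
    by (simp add: exp_of_nat_mult[symmetric] mult.commute)
  ultimately show ?thesis by simp
qed

context esc begin

definition "w xs = prod_list (map (pmf \<mu>) xs)"

lemma w_nonneg: "0 \<le> w xs" unfolding w_def by (intro prod_list_nonneg) auto

lemma m_pos: "0 < m"
proof -
  have "T 1 = pmf \<mu> 1" unfolding T_def by (simp add: pmf0)
  then show ?thesis using T_le_m[of 1] pos1 by simp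
qed

lemma sum_restrict_bound:
  assumes "\<And>xs. xs \<in> compositions n \<Longrightarrow> Q xs \<Longrightarrow> w xs \<le> B xs"
    and "\<And>xs. 0 \<le> B xs"
  shows "(\<Sum>xs\<in>{xs\<in>compositions n. Q xs}. w xs) \<le> (\<Sum>xs\<in>compositions n. B xs)"
proof -
  have "(\<Sum>xs\<in>{xs\<in>compositions n. Q xs}. w xs) \<le> (\<Sum>xs\<in>{xs\<in>compositions n. Q xs}. B xs)"
    using assms(1) by (intro sum_mono) auto
  also have "\<dots> \<le> (\<Sum>xs\<in>compositions n. B xs)"
    using assms(2) by (intro sum_mono2 compositions_finite) auto
  finally show ?thesis .
qed

lemma many_parts:
  assumes \<delta>: "0 < \<delta>"
  shows "(\<lambda>n. \<Sum>xs\<in>{xs\<in>compositions n. real n * (1 + \<delta>) / m \<le> real (length xs)}. w xs) \<longlonglongrightarrow> 0"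
proof -
  define \<theta> where "\<theta> = (2 + \<delta>) / (2 + 2 * \<delta>)"
  define \<theta>1 where "\<theta>1 = (1 + \<theta>) / 2"
  have th: "0 < \<theta>" "\<theta> < 1" "\<theta> * (1 + \<delta>) = 1 + \<delta> / 2" using \<delta> by (auto simp: \<theta>_def field_simps)
  have th1: "\<theta> < \<theta>1" "\<theta>1 < 1" using th by (auto simp: \<theta>1_def)
  have "\<theta>1 * m < m" using th1 m_pos by simp
  then have "eventually (\<lambda>N. \<theta>1 * m < T N) sequentially"
    using order_tendstoD(1)[OF T_lim] by blast
  then obtain N where N: "\<theta>1 * m \<le> T N" by (auto simp: eventually_sequentially intro: less_imp_le)
  define s where "s = (\<theta>1 / \<theta> - 1) / (real N + 1)"
  have "1 < \<theta>1 / \<theta>" using th th1 by (simp add: less_divide_eq_1_pos)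
  then have s: "0 < s" by (simp add: s_def)
  have sN: "1 + s * real N \<le> \<theta>1 / \<theta>"
  proof -
    have "s * real N \<le> s * (real N + 1)" using s by simp
    also have "\<dots> = \<theta>1 / \<theta> - 1" unfolding s_def by simp
    finally show ?thesis by simp
  qed
  define a where "a = s * \<theta> * m"
  have a: "0 \<le> a" unfolding a_def using s th m_pos by simp
  define g where "g x = pmf \<mu> x * exp (a + (- s) * real x)" for x
  have key: "(\<Sum>x=1..n. pmf \<mu> x * exp (- s * real x)) \<le> 1 - a" if n: "N \<le> n" for n
  proof -
    have e1: "(\<Sum>x=1..n. pmf \<mu> x * exp (- s * real x)) = (\<Sum>x\<le>n. pmf \<mu> x * exp (- s * real x))"
      by (rule sum.mono_neutral_left) (auto simp: pmf0 Suc_le_eq)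
    have e2: "(\<Sum>x\<le>n. pmf \<mu> x * exp (- s * real x)) = P n - (\<Sum>x\<le>n. pmf \<mu> x * (1 - exp (- s * real x)))"
      unfolding P_def by (simp add: sum_subtractf algebra_simps)
    have e3: "(\<Sum>x\<le>N. pmf \<mu> x * (1 - exp (- s * real x))) \<le> (\<Sum>x\<le>n. pmf \<mu> x * (1 - exp (- s * real x)))"
      using n s by (intro sum_mono2) auto
    have e4: "(\<Sum>x\<le>N. pmf \<mu> x * (s * real x / (1 + s * real N))) \<le> (\<Sum>x\<le>N. pmf \<mu> x * (1 - exp (- s * real x)))"
    proof (rule sum_mono)
      fix x assume x: "x \<in> {..N}"
      have "s * real x / (1 + s * real N) \<le> s * real x / (1 + s * real x)"
        using x s by (intro divide_left_mono) (auto intro!: mult_pos_pos add_pos_nonneg mult_left_mono)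
      also have "\<dots> \<le> 1 - exp (- (s * real x))" using s by (intro one_minus_exp_ge) simp
      finally show "pmf \<mu> x * (s * real x / (1 + s * real N)) \<le> pmf \<mu> x * (1 - exp (- s * real x))"
        by (intro mult_left_mono) auto
    qed
    have e5: "(\<Sum>x\<le>N. pmf \<mu> x * (s * real x / (1 + s * real N))) = T N * s / (1 + s * real N)"
      unfolding T_def sum_divide_distrib sum_distrib_right by (intro sum.cong) (auto simp: mult_ac)
    have e6: "\<theta>1 * m * s / (\<theta>1 / \<theta>) \<le> T N * s / (1 + s * real N)"
    proof -
      have f1: "\<theta>1 * m * s \<le> T N * s" using N s by (intro mult_right_mono) auto
      have f2: "0 \<le> \<theta>1 * m * s" using th th1 m_pos s by simp
      have f3: "0 < 1 + s * real N" using s by (simp add: add_pos_nonneg)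
      show ?thesis by (rule frac_le[OF _ f1 f3 sN]) (use f1 f2 in linarith)
    qed
    have e7: "\<theta>1 * m * s / (\<theta>1 / \<theta>) = a" unfolding a_def using th th1 by (simp add: field_simps)
    show ?thesis using e1 e2 e3 e4 e5 e6 e7 P_le1[of n] by linarith
  qed
  have Ag: "A g n \<le> 1" if n: "N \<le> n" for n
  proof -
    have "(\<Sum>x=1..n. g x) = exp a * (\<Sum>x=1..n. pmf \<mu> x * exp (- s * real x))"
    proof -
      have ex: "exp (a + (- s) * real x) = exp a * exp (- s * real x)" for x
        by (simp add: exp_add[symmetric])
      show ?thesis unfolding g_def sum_distrib_left ex by (simp add: mult_ac)
    qed
    also have "\<dots> \<le> exp a * (1 - a)" using key[OF n] by (intro mult_left_mono) auto
    also have "\<dots> \<le> 1" by (rule exp_one_minus)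
    finally have "max 1 (\<Sum>x=1..n. g x) = 1" by simp
    then show ?thesis using A_bound[of g n] by (simp add: g_def)
  qed
  define c where "c = s * \<delta> / 2"
  have c: "0 < c" using s \<delta> by (simp add: c_def)
  have bound: "(\<Sum>xs\<in>{xs\<in>compositions n. real n * (1 + \<delta>) / m \<le> real (length xs)}. w xs) \<le> exp (- c * real n)"
    if n: "N \<le> n" for n
  proof -
    have "(\<Sum>xs\<in>{xs\<in>compositions n. real n * (1 + \<delta>) / m \<le> real (length xs)}. w xs)
        \<le> (\<Sum>xs\<in>compositions n. exp (- c * real n) * prod_list (map g xs))"
    proof (rule sum_restrict_bound)
      fix xs assume xs: "xs \<in> compositions n" and k: "real n * (1 + \<delta>) / m \<le> real (length xs)"
      have sl: "sum_list xs = n" using xs by (simp add: compositions_def)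
      have pg: "prod_list (map g xs) = w xs * exp (real (length xs) * a - s * real n)"
        unfolding g_def w_def prod_list_exp sum_list_affine sl by simp
      have "a * (real n * (1 + \<delta>) / m) \<le> a * real (length xs)" using k a by (intro mult_left_mono)
      moreover have "a * (real n * (1 + \<delta>) / m) = s * real n * (1 + \<delta> / 2)"
      proof -
        have "a * (real n * (1 + \<delta>) / m) = s * real n * (\<theta> * (1 + \<delta>))"
          unfolding a_def using m_pos by (simp add: field_simps)
        then show ?thesis using th(3) by simp
      qed
      ultimately have k1: "s * real n * (1 + \<delta> / 2) \<le> a * real (length xs)" by simp
      have k2: "s * real n * (1 + \<delta> / 2) = s * real n + (s * real n * \<delta>) / 2"
        by (simp add: algebra_simps)
      have k3: "c * real n = (s * real n * \<delta>) / 2" unfolding c_def by simp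
      have k4: "0 \<le> s * real n * \<delta>" using s \<delta> by simp
      have k5: "real (length xs) * a = a * real (length xs)" by simp
      define E where "E = real (length xs) * a - s * real n"
      have cE: "c * real n \<le> E"
        unfolding E_def using k1 k2 k3 k4 k5 by linarith
      have "exp (- c * real n) * prod_list (map g xs) = w xs * (exp E * exp (- c * real n))"
        unfolding pg E_def by (simp add: mult_ac)
      also have "exp E * exp (- c * real n) = exp (E - c * real n)" by (simp add: mult_exp_exp)
      finally have eq: "exp (- c * real n) * prod_list (map g xs) = w xs * exp (E - c * real n)" .
      have "1 \<le> exp (E - c * real n)" using cE by simp
      then have "w xs * 1 \<le> w xs * exp (E - c * real n)" using w_nonneg by (intro mult_left_mono) auto
      then show "w xs \<le> exp (- c * real n) * prod_list (map g xs)" unfolding eq by simp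
    qed (auto simp: g_def intro!: mult_nonneg_nonneg prod_list_nonneg)
    also have "\<dots> = exp (- c * real n) * A g n" by (simp add: A_def sum_distrib_left)
    also have "\<dots> \<le> exp (- c * real n)" using Ag[OF n] by simp
    finally show ?thesis .
  qed
  show ?thesis
  proof (rule tendsto_sandwich[OF _ _ tendsto_const exp_decay[OF c]])
    show "eventually (\<lambda>n. 0 \<le> (\<Sum>xs\<in>{xs\<in>compositions n. real n * (1 + \<delta>) / m \<le> real (length xs)}. w xs)) sequentially"
      by (intro always_eventually allI sum_nonneg w_nonneg)
    show "eventually (\<lambda>n. (\<Sum>xs\<in>{xs\<in>compositions n. real n * (1 + \<delta>) / m \<le> real (length xs)}. w xs) \<le> exp (- c * real n)) sequentially"
      using bound by (auto simp: eventually_sequentially)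
  qed
qed

end


lemma prod_list_mult_map:
  fixes f g :: "'a \<Rightarrow> real"
  shows "prod_list (map (\<lambda>x. f x * g x) xs) = prod_list (map f xs) * prod_list (map g xs)"
  by (induction xs) (auto simp: mult_ac)

lemma prod_list_one_plus:
  fixes f :: "'a \<Rightarrow> real"
  assumes "\<And>x. 0 \<le> f x"
  shows "1 + sum_list (map f xs) \<le> prod_list (map (\<lambda>x. 1 + f x) xs)"
proof (induction xs)
  case Nil then show ?case by simp
next
  case (Cons y ys)
  have s0: "0 \<le> sum_list (map f ys)" using assms by (induction ys) (auto intro: add_nonneg_nonneg)
  have "1 + sum_list (map f (y # ys)) \<le> (1 + f y) * (1 + sum_list (map f ys))"
    using assms[of y] s0 by (simp add: algebra_simps)
  also have "\<dots> \<le> (1 + f y) * prod_list (map (\<lambda>x. 1 + f x) ys)"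
    using Cons assms[of y] by (intro mult_left_mono) auto
  finally show ?case by simp
qed

lemma sum_list_affine_gen:
  fixes f :: "'a \<Rightarrow> real"
  shows "sum_list (map (\<lambda>x. c + d * f x) xs) = real (length xs) * c + d * sum_list (map f xs)"
  by (induction xs) (auto simp: algebra_simps)

lemma sum_list_split_hb:
  "sum_list (map (\<lambda>x. if x \<le> M then real x else 0) xs) + sum_list (map (\<lambda>x. if x \<le> M then 0 else real x) xs)
   = real (sum_list xs)"
  by (induction xs) auto

context esc begin

lemma few_parts:
  assumes \<delta>: "0 < \<delta>" "\<delta> \<le> 1" and \<eta>: "0 < \<eta>"
  shows "eventually (\<lambda>n. (\<Sum>xs\<in>{xs\<in>compositions n. real (length xs) \<le> real n * (1 - \<delta>) / m}. w xs) \<le> \<eta>) sequentially"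
proof -
  define \<gamma> where "\<gamma> = \<delta> / 4"
  have \<gamma>: "0 < \<gamma>" unfolding \<gamma>_def using \<delta> by simp
  define lam where "lam = 2 * exp 1 / (\<eta> * \<gamma>)"
  have lam: "0 < lam" unfolding lam_def using \<eta> \<gamma> by simp
  have lg: "exp 1 / (1 + lam * \<gamma>) \<le> \<eta> / 2"
  proof -
    have "lam * \<gamma> = 2 * exp 1 / \<eta>" unfolding lam_def using \<gamma> by (simp add: field_simps)
    then have "2 * exp 1 / \<eta> \<le> 1 + lam * \<gamma>" by simp
    then have "2 * exp 1 \<le> \<eta> * (1 + lam * \<gamma>)" using \<eta> by (simp add: field_simps)
    moreover have "0 < 1 + lam * \<gamma>" using lam \<gamma> by (simp add: add_pos_pos)
    ultimately show ?thesis using \<eta> by (simp add: field_simps)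
  qed
  have "m - 1 / lam < m" using lam by simp
  then have "eventually (\<lambda>M. m - 1 / lam < T M) sequentially"
    using order_tendstoD(1)[OF T_lim] by blast
  then obtain M where M: "m - 1 / lam \<le> T M" by (auto simp: eventually_sequentially intro: less_imp_le)
  define e where "e = m - T M"
  have e: "0 \<le> e" "lam * e \<le> 1" unfolding e_def using T_le_m[of M] M lam by (auto simp: field_simps)
  define s where "s = ln (1 + \<gamma>) / (real M + 1)"
  have s: "0 < s" unfolding s_def using \<gamma> by simp
  define \<beta> where "\<beta> = exp (s * real M)"
  have \<beta>: "1 \<le> \<beta>" "\<beta> \<le> 1 + \<gamma>"
  proof -
    show "1 \<le> \<beta>" unfolding \<beta>_def using s by simp
    have "s * real M \<le> s * (real M + 1)" using s by simp
    also have "\<dots> = ln (1 + \<gamma>)" unfolding s_def by simp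
    finally have "\<beta> \<le> exp (ln (1 + \<gamma>))" unfolding \<beta>_def by simp
    then show "\<beta> \<le> 1 + \<gamma>" using \<gamma> by simp
  qed
  define a where "a = s * m * \<beta>"
  define h where "h x = (if x \<le> M then real x else 0)" for x
  define b where "b x = (if x \<le> M then 0 else real x)" for x
  define g1 where "g1 x = pmf \<mu> x * exp (- a + s * h x)" for x
  define g2 where "g2 n x = pmf \<mu> x * (1 + lam * b x / real n)" for n x
  have g1_nonneg: "0 \<le> g1 x" for x unfolding g1_def by simp
  have g2_nonneg: "0 \<le> g2 n x" for n x unfolding g2_def b_def using lam by auto
  have S1: "A g1 n \<le> 1" for n
  proof -
    have "(\<Sum>x=1..n. pmf \<mu> x * exp (s * h x)) \<le> (\<Sum>x=1..n. pmf \<mu> x + s * \<beta> * (pmf \<mu> x * real x))"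
    proof (rule sum_mono)
      fix x
      have hx: "0 \<le> h x" "h x \<le> real x" "h x \<le> real M" unfolding h_def by auto
      have "exp (s * h x) - 1 \<le> s * h x * exp (s * h x)" by (rule exp_minus_one_le)
      also have "\<dots> \<le> s * real x * \<beta>"
        unfolding \<beta>_def using hx s by (intro mult_mono) auto
      finally have "exp (s * h x) \<le> 1 + s * \<beta> * real x" by (simp add: mult_ac)
      then have "pmf \<mu> x * exp (s * h x) \<le> pmf \<mu> x * (1 + s * \<beta> * real x)"
        by (intro mult_left_mono) auto
      then show "pmf \<mu> x * exp (s * h x) \<le> pmf \<mu> x + s * \<beta> * (pmf \<mu> x * real x)"
        by (simp add: algebra_simps)
    qed
    also have "\<dots> = (\<Sum>x=1..n. pmf \<mu> x) + s * \<beta> * (\<Sum>x=1..n. pmf \<mu> x * real x)"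
      by (simp add: sum.distrib sum_distrib_left)
    also have "(\<Sum>x=1..n. pmf \<mu> x) \<le> P n" unfolding P_def by (intro sum_mono2) auto
    also have "(\<Sum>x=1..n. pmf \<mu> x * real x) \<le> T n" unfolding T_def by (intro sum_mono2) auto
    finally have "(\<Sum>x=1..n. pmf \<mu> x * exp (s * h x)) \<le> P n + s * \<beta> * T n"
      using s \<beta> by simp
    also have "\<dots> \<le> 1 + a"
      using P_le1[of n] T_le_m[of n] s \<beta> unfolding a_def
      by (intro add_mono) (auto simp: mult_ac intro!: mult_left_mono)
    also have "\<dots> \<le> exp a" by (rule exp_ge_add_one_self)
    finally have le: "(\<Sum>x=1..n. pmf \<mu> x * exp (s * h x)) \<le> exp a" .
    have ex: "exp (- a + s * h x) = exp (- a) * exp (s * h x)" for x by (simp only: exp_add)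
    have "(\<Sum>x=1..n. g1 x) = exp (- a) * (\<Sum>x=1..n. pmf \<mu> x * exp (s * h x))"
      unfolding g1_def ex sum_distrib_left by (simp add: mult_ac)
    also have "\<dots> \<le> exp (- a) * exp a" using le by (intro mult_left_mono) auto
    also have "\<dots> = 1" by (simp add: exp_minus)
    finally have "max 1 (\<Sum>x=1..n. g1 x) = 1" by simp
    then show ?thesis using A_bound[of g1 n] g1_nonneg by simp
  qed
  have S2: "A (g2 n) n \<le> exp 1" if n: "0 < n" for n
  proof -
    have bsum: "(\<Sum>x=1..n. pmf \<mu> x * b x) \<le> e"
    proof (cases "n \<le> M")
      case True
      then have "(\<Sum>x=1..n. pmf \<mu> x * b x) = 0" unfolding b_def by (intro sum.neutral) auto
      then show ?thesis using e by simp
    next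
      case False
      have "(\<Sum>x=1..n. pmf \<mu> x * b x) = (\<Sum>x\<le>n. pmf \<mu> x * b x)"
        by (rule sum.mono_neutral_left) (auto simp: pmf0 Suc_le_eq)
      also have "\<dots> = (\<Sum>x\<le>M. pmf \<mu> x * b x) + (\<Sum>x\<in>{M<..n}. pmf \<mu> x * b x)"
        using False by (intro sum_split_atMost) auto
      also have "(\<Sum>x\<le>M. pmf \<mu> x * b x) = 0" unfolding b_def by (intro sum.neutral) auto
      also have "(\<Sum>x\<in>{M<..n}. pmf \<mu> x * b x) = (\<Sum>x\<in>{M<..n}. pmf \<mu> x * real x)"
        unfolding b_def by (intro sum.cong) auto
      also have "\<dots> = T n - T M"
        unfolding T_def using False sum_split_atMost[of M n "\<lambda>x. pmf \<mu> x * real x"] by simp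
      also have "\<dots> \<le> e" unfolding e_def using T_le_m[of n] by simp
      finally show ?thesis by simp
    qed
    have "(\<Sum>x=1..n. g2 n x) = (\<Sum>x=1..n. pmf \<mu> x) + lam / real n * (\<Sum>x=1..n. pmf \<mu> x * b x)"
      unfolding g2_def by (simp add: sum.distrib sum_distrib_left algebra_simps)
    also have "(\<Sum>x=1..n. pmf \<mu> x) \<le> 1"
      using P_le1[of n] unfolding P_def by (metis (no_types) atLeastAtMost_iff atMost_iff
        finite_atMost order_trans pmf_nonneg subsetI sum_mono2)
    also have "lam / real n * (\<Sum>x=1..n. pmf \<mu> x * b x) \<le> lam / real n * e"
      using bsum lam by (intro mult_left_mono) auto
    finally have G: "(\<Sum>x=1..n. g2 n x) \<le> 1 + lam * e / real n" by simp
    have G0: "0 \<le> lam * e / real n" using lam e by simp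
    have "A (g2 n) n \<le> max 1 (\<Sum>x=1..n. g2 n x) ^ n" using A_bound[of "g2 n" n] g2_nonneg by simp
    also have "\<dots> \<le> (1 + lam * e / real n) ^ n"
      using G G0 by (intro power_mono) auto
    also have "\<dots> \<le> exp (lam * e / real n) ^ n"
      using G0 by (intro power_mono exp_ge_add_one_self) auto
    also have "\<dots> = exp (real n * (lam * e / real n))" by (rule exp_of_nat_mult[symmetric])
    also have "real n * (lam * e / real n) = lam * e" using n by simp
    also have "exp (lam * e) \<le> exp 1" using e by simp
    finally show ?thesis .
  qed
  define c where "c = s * \<delta> / 2"
  have c: "0 < c" unfolding c_def using s \<delta> by simp
  have bound: "(\<Sum>xs\<in>{xs\<in>compositions n. real (length xs) \<le> real n * (1 - \<delta>) / m}. w xs)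
      \<le> exp (- c * real n) + \<eta> / 2" if n: "0 < n" for n
  proof -
    have "(\<Sum>xs\<in>{xs\<in>compositions n. real (length xs) \<le> real n * (1 - \<delta>) / m}. w xs)
        \<le> (\<Sum>xs\<in>compositions n. exp (- c * real n) * prod_list (map g1 xs)
              + prod_list (map (g2 n) xs) / (1 + lam * \<gamma>))"
    proof (rule sum_restrict_bound)
      fix xs assume xs: "xs \<in> compositions n" and k: "real (length xs) \<le> real n * (1 - \<delta>) / m"
      have sl: "sum_list xs = n" using xs by (simp add: compositions_def)
      define S' where "S' = sum_list (map h xs)"
      define B where "B = sum_list (map b xs)"
      have SB: "S' + B = real n" unfolding S'_def B_def h_def b_def using sum_list_split_hb[of M xs] sl by simp
      have nn1: "0 \<le> exp (- c * real n) * prod_list (map g1 xs)"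
        using g1_nonneg by (intro mult_nonneg_nonneg prod_list_nonneg) auto
      have nn2: "0 \<le> prod_list (map (g2 n) xs) / (1 + lam * \<gamma>)"
        using g2_nonneg lam \<gamma> by (intro divide_nonneg_nonneg prod_list_nonneg) auto
      show "w xs \<le> exp (- c * real n) * prod_list (map g1 xs) + prod_list (map (g2 n) xs) / (1 + lam * \<gamma>)"
      proof (cases "(1 - \<gamma>) * real n \<le> S'")
        case True
        define E where "E = real (length xs) * (- a) + s * S'"
        have pg: "prod_list (map g1 xs) = w xs * exp E"
          unfolding g1_def w_def prod_list_exp sum_list_affine_gen E_def S'_def by simp
        have "a * real (length xs) \<le> a * (real n * (1 - \<delta>) / m)"
          using k s m_pos \<beta> unfolding a_def by (intro mult_left_mono) auto
        also have "\<dots> = s * real n * (\<beta> * (1 - \<delta>))" unfolding a_def using m_pos by (simp add: field_simps)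
        also have "\<dots> \<le> s * real n * ((1 + \<gamma>) * (1 - \<delta>))"
          using s \<beta> \<delta> by (intro mult_left_mono mult_right_mono) auto
        finally have k1: "a * real (length xs) \<le> s * real n * ((1 + \<gamma>) * (1 - \<delta>))" .
        have k2: "s * real n * (1 - \<gamma>) \<le> s * S'" using True s by (simp add: mult_ac mult_left_mono)
        have k3: "s * real n * ((1 + \<gamma>) * (1 - \<delta>)) + c * real n \<le> s * real n * (1 - \<gamma>)"
        proof -
          have "(1 + \<gamma>) * (1 - \<delta>) + \<delta> / 2 \<le> 1 - \<gamma>"
            unfolding \<gamma>_def using \<delta> by (simp add: field_simps)
          then have "s * real n * ((1 + \<gamma>) * (1 - \<delta>) + \<delta> / 2) \<le> s * real n * (1 - \<gamma>)"
            using s by (intro mult_left_mono) auto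
          then show ?thesis unfolding c_def by (simp add: algebra_simps)
        qed
        have cE: "c * real n \<le> E" unfolding E_def using k1 k2 k3 by (simp add: algebra_simps)
        have "exp (- c * real n) * prod_list (map g1 xs) = w xs * (exp E * exp (- c * real n))"
          unfolding pg by (simp add: mult_ac)
        also have "exp E * exp (- c * real n) = exp (E - c * real n)" by (simp add: mult_exp_exp)
        finally have eq: "exp (- c * real n) * prod_list (map g1 xs) = w xs * exp (E - c * real n)" .
        have "1 \<le> exp (E - c * real n)" using cE by simp
        then have "w xs * 1 \<le> w xs * exp (E - c * real n)" using w_nonneg by (intro mult_left_mono) auto
        then have "w xs \<le> exp (- c * real n) * prod_list (map g1 xs)" unfolding eq by simp
        then show ?thesis using nn2 by linarith
      next
        case False
        then have BB: "\<gamma> * real n \<le> B" using SB by (simp add: algebra_simps)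
        have pg: "prod_list (map (g2 n) xs) = w xs * prod_list (map (\<lambda>x. 1 + lam * b x / real n) xs)"
          unfolding g2_def w_def by (rule prod_list_mult_map)
        have "1 + sum_list (map (\<lambda>x. lam * b x / real n) xs) \<le> prod_list (map (\<lambda>x. 1 + lam * b x / real n) xs)"
          using lam by (intro prod_list_one_plus) (auto simp: b_def)
        moreover have "sum_list (map (\<lambda>x. lam * b x / real n) xs) = lam / real n * B"
          unfolding B_def by (induction xs) (auto simp: algebra_simps)
        moreover have "lam * \<gamma> \<le> lam / real n * B"
        proof -
          have "lam * (\<gamma> * real n) \<le> lam * B" using BB lam by (intro mult_left_mono) auto
          then show ?thesis using n by (simp add: field_simps)
        qed
        ultimately have P1: "1 + lam * \<gamma> \<le> prod_list (map (\<lambda>x. 1 + lam * b x / real n) xs)" by linarith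
        have pos: "0 < 1 + lam * \<gamma>" using lam \<gamma> by (simp add: add_pos_pos)
        have "w xs * (1 + lam * \<gamma>) \<le> prod_list (map (g2 n) xs)"
          unfolding pg using P1 w_nonneg by (intro mult_left_mono) auto
        then have "w xs \<le> prod_list (map (g2 n) xs) / (1 + lam * \<gamma>)"
          using pos by (simp add: field_simps)
        then show ?thesis using nn1 by linarith
      qed
    next
      fix xs show "0 \<le> exp (- c * real n) * prod_list (map g1 xs) + prod_list (map (g2 n) xs) / (1 + lam * \<gamma>)"
        using g1_nonneg g2_nonneg lam \<gamma>
        by (intro add_nonneg_nonneg mult_nonneg_nonneg divide_nonneg_nonneg prod_list_nonneg) auto
    qed
    also have "\<dots> = exp (- c * real n) * A g1 n + A (g2 n) n / (1 + lam * \<gamma>)"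
      by (simp add: A_def sum.distrib sum_distrib_left sum_divide_distrib)
    also have "\<dots> \<le> exp (- c * real n) * 1 + exp 1 / (1 + lam * \<gamma>)"
      using S1[of n] S2[OF n] lam \<gamma>
      by (intro add_mono mult_left_mono divide_right_mono) auto
    also have "\<dots> \<le> exp (- c * real n) + \<eta> / 2" using lg by simp
    finally show ?thesis .
  qed
  have "eventually (\<lambda>n. exp (- c * real n) < \<eta> / 2) sequentially"
  proof -
    have "0 < \<eta> / 2" using \<eta> by simp
    from order_tendstoD(2)[OF exp_decay[OF c] this] show ?thesis .
  qed
  moreover have "eventually (\<lambda>n. 0 < n) sequentially" by (rule eventually_gt_at_top)
  ultimately have ev: "eventually (\<lambda>n. exp (- c * real n) < \<eta> / 2 \<and> 0 < n) sequentially"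
    by (rule eventually_conj)
  show ?thesis
  proof (rule eventually_mono[OF ev])
    fix n :: nat assume "exp (- c * real n) < \<eta> / 2 \<and> 0 < n"
    then show "(\<Sum>xs\<in>{xs\<in>compositions n. real (length xs) \<le> real n * (1 - \<delta>) / m}. w xs) \<le> \<eta>"
      using bound[of n] by linarith
  qed
qed

end


lemma length_label_vector: "length (label_vector xs) = sum_list xs"
proof -
  have "length (label_vector xs) = sum_list (map (\<lambda>j. xs ! j) [0..<length xs])"
    unfolding label_vector_def by (simp add: length_concat comp_def)
  also have "\<dots> = sum_list xs" by (simp only: map_nth)
  finally show ?thesis .
qed

lemma in_label_vector:
  assumes "\<forall>x\<in>set xs. 0 < x" "j \<in> {1..length xs}"
  shows "j \<in> set (label_vector xs)"
proof -
  have j: "j - 1 < length xs" "Suc (j - 1) = j" using assms(2) by auto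
  then have "0 < xs ! (j - 1)" using assms(1) nth_mem by blast
  then show ?thesis unfolding label_vector_def using j by (force simp: set_replicate_conv_if)
qed

lemma card_partition:
  assumes xs: "xs \<in> compositions n" and \<sigma>: "\<sigma> permutes {1..n}"
  shows "card {{i \<in> {1..n}. label_vector xs ! (\<sigma> i - 1) = j} | j. j \<in> {1..length xs}} = length xs"
proof -
  define blk where "blk j = {i \<in> {1..n}. label_vector xs ! (\<sigma> i - 1) = j}" for j
  have pos: "\<forall>x\<in>set xs. 0 < x" and sl: "sum_list xs = n" using xs by (auto simp: compositions_def)
  have ne: "\<exists>i. i \<in> blk j" if j: "j \<in> {1..length xs}" for j
  proof -
    have "j \<in> set (label_vector xs)" using in_label_vector[OF pos j] .
    then obtain p where p: "p < n" "label_vector xs ! p = j"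
      using length_label_vector[of xs] sl by (auto simp: in_set_conv_nth)
    define i where "i = inv \<sigma> (Suc p)"
    have "Suc p \<in> {1..n}" using p by auto
    then have "i \<in> {1..n}" unfolding i_def using permutes_in_image[OF permutes_inv[OF \<sigma>]] by blast
    moreover have "\<sigma> i = Suc p" unfolding i_def using permutes_inverses(1)[OF \<sigma>] by simp
    ultimately show ?thesis using p unfolding blk_def by auto
  qed
  have inj: "inj_on blk {1..length xs}"
  proof (rule inj_onI)
    fix j j' assume j: "j \<in> {1..length xs}" and "j' \<in> {1..length xs}" and eq: "blk j = blk j'"
    obtain i where "i \<in> blk j" using ne[OF j] by blast
    then have "i \<in> blk j'" using eq by simp
    with \<open>i \<in> blk j\<close> show "j = j'" unfolding blk_def by auto
  qed
  have "{{i \<in> {1..n}. label_vector xs ! (\<sigma> i - 1) = j} | j. j \<in> {1..length xs}} = blk ` {1..length xs}"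
    unfolding blk_def by auto
  then show ?thesis using card_image[OF inj] by simp
qed

context esc begin

lemma u_eq: "u n = (\<Sum>xs\<in>compositions n. w xs)"
  unfolding u_def A_def w_def by simp

lemma u_pos: "0 < u n" using u_lower by (metis less_le_trans)

definition "fsz n xs = (if xs \<in> compositions n then w xs / u n else 0)"

lemma fsz_nonneg: "0 \<le> fsz n xs"
  unfolding fsz_def using w_nonneg u_pos[of n] by simp

lemma fsz_prob: "(\<integral>\<^sup>+xs. ennreal (fsz n xs) \<partial>count_space UNIV) = 1"
proof -
  have "(\<integral>\<^sup>+xs. ennreal (fsz n xs) \<partial>count_space UNIV) = (\<Sum>xs\<in>compositions n. ennreal (fsz n xs))"
    by (rule nn_integral_count_space') (auto simp: compositions_finite fsz_def)
  also have "\<dots> = ennreal (\<Sum>xs\<in>compositions n. fsz n xs)"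
    using fsz_nonneg by simp
  also have "(\<Sum>xs\<in>compositions n. fsz n xs) = (\<Sum>xs\<in>compositions n. w xs) / u n"
    unfolding fsz_def by (simp add: sum_divide_distrib)
  also have "\<dots> = 1" using u_pos[of n] u_eq[of n] by simp
  finally show ?thesis by simp
qed

lemma ESC_sizes_eq: "ESC_sizes \<mu> n = embed_pmf (fsz n)"
proof -
  have "comp_weight \<mu> = w" unfolding comp_weight_def w_def by (rule ext) simp
  then show ?thesis unfolding ESC_sizes_def fsz_def u_eq by (simp only:)
qed

lemma pmf_sizes: "pmf (ESC_sizes \<mu> n) xs = fsz n xs"
  unfolding ESC_sizes_eq by (rule pmf_embed_pmf[OF fsz_nonneg fsz_prob])

lemma set_sizes: "set_pmf (ESC_sizes \<mu> n) \<subseteq> compositions n"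
  by (auto simp: set_pmf_iff pmf_sizes fsz_def split: if_splits)

lemma map_card_ESC: "map_pmf card (ESC \<mu> n) = map_pmf length (ESC_sizes \<mu> n)"
proof -
  let ?S = "{\<sigma>. \<sigma> permutes {1..n::nat}}"
  have fin: "finite ?S" by (rule finite_permutations) simp
  have ne: "?S \<noteq> {}" using permutes_id by blast
  have "map_pmf card (ESC \<mu> n) = ESC_sizes \<mu> n \<bind> (\<lambda>xs. pmf_of_set ?S \<bind>
      (\<lambda>\<sigma>. return_pmf (card {{i \<in> {1..n}. label_vector xs ! (\<sigma> i - 1) = j} | j. j \<in> {1..length xs}})))"
    unfolding ESC_def by (simp add: map_bind_pmf)
  also have "\<dots> = ESC_sizes \<mu> n \<bind> (\<lambda>xs. pmf_of_set ?S \<bind> (\<lambda>\<sigma>. return_pmf (length xs)))"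
  proof (intro bind_pmf_cong refl)
    fix xs \<sigma> assume xs: "xs \<in> set_pmf (ESC_sizes \<mu> n)" and s: "\<sigma> \<in> set_pmf (pmf_of_set ?S)"
    have "xs \<in> compositions n" using xs set_sizes by blast
    moreover have "\<sigma> permutes {1..n}" using s fin ne by simp
    ultimately show "return_pmf (card {{i \<in> {1..n}. label_vector xs ! (\<sigma> i - 1) = j} | j. j \<in> {1..length xs}})
        = return_pmf (length xs)" using card_partition by simp
  qed
  also have "\<dots> = map_pmf length (ESC_sizes \<mu> n)" by (simp add: map_pmf_def)
  finally show ?thesis .
qed

lemma prob_ESC:
  "measure (measure_pmf (ESC \<mu> n)) {P. Q (card P)} = (\<Sum>xs\<in>{xs\<in>compositions n. Q (length xs)}. w xs) / u n"
proof -
  have "measure (measure_pmf (ESC \<mu> n)) {P. Q (card P)} = measure (measure_pmf (map_pmf card (ESC \<mu> n))) {k. Q k}"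
    by simp
  also have "\<dots> = measure (measure_pmf (ESC_sizes \<mu> n)) {xs. Q (length xs)}"
    unfolding map_card_ESC by simp
  also have "\<dots> = measure (measure_pmf (ESC_sizes \<mu> n)) ({xs. Q (length xs)} \<inter> set_pmf (ESC_sizes \<mu> n))"
    by (simp add: measure_Int_set_pmf)
  also have "{xs. Q (length xs)} \<inter> set_pmf (ESC_sizes \<mu> n) = {xs\<in>compositions n. Q (length xs)} \<inter> set_pmf (ESC_sizes \<mu> n)"
    using set_sizes by blast
  also have "measure (measure_pmf (ESC_sizes \<mu> n)) \<dots> = measure (measure_pmf (ESC_sizes \<mu> n)) {xs\<in>compositions n. Q (length xs)}"
    by (simp add: measure_Int_set_pmf)
  also have "\<dots> = (\<Sum>xs\<in>{xs\<in>compositions n. Q (length xs)}. pmf (ESC_sizes \<mu> n) xs)"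
    by (rule measure_measure_pmf_finite) (simp add: compositions_finite)
  also have "\<dots> = (\<Sum>xs\<in>{xs\<in>compositions n. Q (length xs)}. w xs / u n)"
    by (intro sum.cong) (auto simp: pmf_sizes fsz_def)
  finally show ?thesis by (simp add: sum_divide_distrib)
qed

end


theorem theorem1:
  fixes \<mu> :: "nat pmf"
  assumes "0 \<notin> set_pmf \<mu>"
    and "pmf \<mu> 1 > 0"
    and "integrable (measure_pmf \<mu>) real"
  shows "\<forall>\<epsilon>>0. (\<lambda>n. measure_pmf.prob (ESC \<mu> n)
            {P. \<bar>real (card P) / real n - 1 / measure_pmf.expectation \<mu> real\<bar> > \<epsilon>})
          \<longlonglongrightarrow> 0"
proof -
  interpret esc \<mu> using assms by unfold_locales
  show ?thesis
  proof (intro allI impI)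
    fix \<epsilon> :: real assume \<epsilon>: "\<epsilon> > 0"
    define \<epsilon>' where "\<epsilon>' = min \<epsilon> (1 / m)"
    have \<epsilon>': "0 < \<epsilon>'" "\<epsilon>' \<le> \<epsilon>" "\<epsilon>' \<le> 1 / m" unfolding \<epsilon>'_def using \<epsilon> m_pos by auto
    define \<delta> where "\<delta> = \<epsilon>' * m"
    have \<delta>: "0 < \<delta>" "\<delta> \<le> 1" unfolding \<delta>_def using \<epsilon>' m_pos by (auto simp: field_simps)
    obtain c0 where c0: "0 < c0" "\<And>n. c0 \<le> u n" using u_lower by blast
    define D1 where "D1 n = (\<Sum>xs\<in>{xs\<in>compositions n. real n * (1 + \<delta>) / m \<le> real (length xs)}. w xs)" for n
    define D2 where "D2 n = (\<Sum>xs\<in>{xs\<in>compositions n. real (length xs) \<le> real n * (1 - \<delta>) / m}. w xs)" for n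
    define p where "p n = measure_pmf.prob (ESC \<mu> n)
            {P. \<bar>real (card P) / real n - 1 / measure_pmf.expectation \<mu> real\<bar> > \<epsilon>}" for n
    have D1_lim: "D1 \<longlonglongrightarrow> 0" unfolding D1_def by (rule many_parts[OF \<delta>(1)])
    have bound: "p n \<le> (D1 n + D2 n) / c0" if n: "0 < n" for n
    proof -
      define Bad where "Bad = {xs\<in>compositions n. \<epsilon> < \<bar>real (length xs) / real n - 1 / m\<bar>}"
      define S1 where "S1 = {xs\<in>compositions n. real n * (1 + \<delta>) / m \<le> real (length xs)}"
      define S2 where "S2 = {xs\<in>compositions n. real (length xs) \<le> real n * (1 - \<delta>) / m}"
      have pe: "p n = (\<Sum>xs\<in>Bad. w xs) / u n"
        unfolding p_def Bad_def m_def[symmetric] by (rule prob_ESC)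
      have sub: "Bad \<subseteq> S1 \<union> S2"
      proof
        fix xs assume xs: "xs \<in> Bad"
        let ?k = "real (length xs)"
        have nm: "real n * (1 + \<delta>) / m = real n / m + real n * \<epsilon>'"
          "real n * (1 - \<delta>) / m = real n / m - real n * \<epsilon>'"
          unfolding \<delta>_def using m_pos by (auto simp: field_simps)
        have "\<epsilon>' < \<bar>?k / real n - 1 / m\<bar>" using xs \<epsilon>' unfolding Bad_def by auto
        then have "\<epsilon>' < ?k / real n - 1 / m \<or> \<epsilon>' < 1 / m - ?k / real n" by linarith
        then have "real n / m + real n * \<epsilon>' \<le> ?k \<or> ?k \<le> real n / m - real n * \<epsilon>'"
        proof
          assume "\<epsilon>' < ?k / real n - 1 / m"
          then have "1 / m + \<epsilon>' < ?k / real n" by simp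
          then have "(1 / m + \<epsilon>') * real n < ?k" using n by (simp add: pos_less_divide_eq)
          moreover have "(1 / m + \<epsilon>') * real n = real n / m + real n * \<epsilon>'" by (simp add: algebra_simps)
          ultimately show ?thesis by simp
        next
          assume "\<epsilon>' < 1 / m - ?k / real n"
          then have "?k / real n < 1 / m - \<epsilon>'" by simp
          then have "?k < (1 / m - \<epsilon>') * real n" using n by (simp add: pos_divide_less_eq)
          moreover have "(1 / m - \<epsilon>') * real n = real n / m - real n * \<epsilon>'" by (simp add: algebra_simps)
          ultimately show ?thesis by simp
        qed
        then show "xs \<in> S1 \<union> S2" using xs nm unfolding Bad_def S1_def S2_def by auto
      qed
      have fin: "finite S1" "finite S2" unfolding S1_def S2_def by (auto simp: compositions_finite)
      have "(\<Sum>xs\<in>Bad. w xs) \<le> (\<Sum>xs\<in>S1 \<union> S2. w xs)"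
        using sub fin w_nonneg by (intro sum_mono2) auto
      also have "\<dots> \<le> (\<Sum>xs\<in>S1. w xs) + (\<Sum>xs\<in>S2. w xs)"
        using fin w_nonneg by (simp add: sum_Un sum_nonneg)
      also have "\<dots> = D1 n + D2 n" unfolding D1_def D2_def S1_def S2_def by simp
      finally have num: "(\<Sum>xs\<in>Bad. w xs) \<le> D1 n + D2 n" .
      have "p n \<le> (\<Sum>xs\<in>Bad. w xs) / c0"
        unfolding pe using c0 w_nonneg by (intro divide_left_mono sum_nonneg) (auto intro: mult_pos_pos u_pos)
      also have "\<dots> \<le> (D1 n + D2 n) / c0" using num c0 by (intro divide_right_mono) auto
      finally show ?thesis .
    qed
    show "(\<lambda>n. measure_pmf.prob (ESC \<mu> n)
            {P. \<bar>real (card P) / real n - 1 / measure_pmf.expectation \<mu> real\<bar> > \<epsilon>}) \<longlonglongrightarrow> 0"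
      unfolding p_def[symmetric]
    proof (rule LIMSEQ_I)
      fix r :: real assume r: "0 < r"
      have "0 < r * c0 / 2" using r c0 by simp
      then have ev1: "eventually (\<lambda>n. D1 n < r * c0 / 2) sequentially"
        using order_tendstoD(2)[OF D1_lim] by blast
      have "0 < r * c0 / 3" using r c0 by simp
      then have ev2: "eventually (\<lambda>n. D2 n \<le> r * c0 / 3) sequentially"
        unfolding D2_def by (rule few_parts[OF \<delta>])
      have ev3: "eventually (\<lambda>n. 0 < n) sequentially" by (rule eventually_gt_at_top)
      have "eventually (\<lambda>n. norm (p n - 0) < r) sequentially"
      proof (rule eventually_mono[OF eventually_conj[OF ev1 eventually_conj[OF ev2 ev3]]])
        fix n assume h: "D1 n < r * c0 / 2 \<and> D2 n \<le> r * c0 / 3 \<and> 0 < n"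
        have rc: "0 < r * c0" using r c0 by simp
        have "D1 n + D2 n < r * c0" using h rc by linarith
        then have "(D1 n + D2 n) / c0 < (r * c0) / c0"
          using c0 by (intro divide_strict_right_mono) auto
        also have "(r * c0) / c0 = r" using c0 by simp
        finally have "(D1 n + D2 n) / c0 < r" .
        then have "p n < r" using bound h by (meson le_less_trans)
        moreover have "0 \<le> p n" unfolding p_def by (rule measure_nonneg)
        ultimately show "norm (p n - 0) < r" by simp
      qed
      then show "\<exists>no. \<forall>n\<ge>no. norm (p n - 0) < r" by (simp add: eventually_sequentially)
    qed
  qed
qed


end
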